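(* Let $Q$ be a finite quiver of diameter $1$. As $\le$ ranges over all graphic orderings of $Q$, the simple labelings $\sigma_\le$ range over exactly the set of strict acyclic labelings of the simplification $Q^{\mathrm s}$.
   Context: Quivers: - $Q$ has diameter $1$ if no vertex is both the target of an arrow and the source of an arrow. - A sink is a vertex that is the target of some arrow; every other vertex (including isolated ones) is a source. - $d,c$ denote the source and target maps. Simplification: - An arrow $s\to t$ is isolated if it is the unique arrow from $s$ to $t$, and parallel otherwise. - A sink is isolating if it is the target of some isolated arrow. - $Q^{\mathrm s}$ is obtained from $Q$ by deleting all parallel arrows and all non-isolating sinks. Labelings: - A labeling is a map from the arrows to $\{+,-\}$. It is acyclic if reversing the arrows labelled $-$ yields an orientation of the underlying multigraph without directed cycles. - It is strict if every sink is the target of exactly one arrow labelled $+$. Graphic orderings: - A graphic ordering of $Q$ is a linear order $\le$ on the set of sources of $Q$. - It determines a labeling $\sigma_\le$ of $Q^{\mathrm s}$: for an arrow $x$ of $Q^{\mathrm s}$, $\sigma_\le(x)=+$ if and only if $d(x)$ is the $\le$-least element of $\{d(y)\mid y \text{ an arrow of } Q^{\mathrm s},\ c(y)=c(x)\}$. *)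

theory Defs
  imports Main
begin

text \<open>A quiver is given by a vertex set V, an arrow set E and source/target
maps d, c. Labels are Plus / Minus.\<close>

datatype sign = Plus | Minus

definition quiver :: "'v set \<Rightarrow> 'e set \<Rightarrow> ('e \<Rightarrow> 'v) \<Rightarrow> ('e \<Rightarrow> 'v) \<Rightarrow> bool" where
  "quiver V E d c \<longleftrightarrow> (\<forall>x\<in>E. d x \<in> V \<and> c x \<in> V)"

definition finite_quiver :: "'v set \<Rightarrow> 'e set \<Rightarrow> ('e \<Rightarrow> 'v) \<Rightarrow> ('e \<Rightarrow> 'v) \<Rightarrow> bool" where
  "finite_quiver V E d c \<longleftrightarrow> quiver V E d c \<and> finite V \<and> finite E"

definition diameter_one :: "'e set \<Rightarrow> ('e \<Rightarrow> 'v) \<Rightarrow> ('e \<Rightarrow> 'v) \<Rightarrow> bool" where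
  "diameter_one E d c \<longleftrightarrow> (\<forall>x\<in>E. \<forall>y\<in>E. c x \<noteq> d y)"

definition sinks :: "'v set \<Rightarrow> 'e set \<Rightarrow> ('e \<Rightarrow> 'v) \<Rightarrow> 'v set" where
  "sinks V E c = {v\<in>V. \<exists>x\<in>E. c x = v}"

definition sources :: "'v set \<Rightarrow> 'e set \<Rightarrow> ('e \<Rightarrow> 'v) \<Rightarrow> 'v set" where
  "sources V E c = V - sinks V E c"

definition isolated_arrow :: "'e set \<Rightarrow> ('e \<Rightarrow> 'v) \<Rightarrow> ('e \<Rightarrow> 'v) \<Rightarrow> 'e \<Rightarrow> bool" where
  "isolated_arrow E d c x \<longleftrightarrow> x \<in> E \<and> (\<forall>y\<in>E. d y = d x \<and> c y = c x \<longrightarrow> y = x)"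

definition isolating_sinks :: "'v set \<Rightarrow> 'e set \<Rightarrow> ('e \<Rightarrow> 'v) \<Rightarrow> ('e \<Rightarrow> 'v) \<Rightarrow> 'v set" where
  "isolating_sinks V E d c = {v \<in> sinks V E c. \<exists>x\<in>E. isolated_arrow E d c x \<and> c x = v}"

text \<open>The simplification Q^s: delete all parallel arrows and all non-isolating sinks.\<close>
definition simp_arrows :: "'e set \<Rightarrow> ('e \<Rightarrow> 'v) \<Rightarrow> ('e \<Rightarrow> 'v) \<Rightarrow> 'e set" where
  "simp_arrows E d c = {x\<in>E. isolated_arrow E d c x}"

definition simp_verts :: "'v set \<Rightarrow> 'e set \<Rightarrow> ('e \<Rightarrow> 'v) \<Rightarrow> ('e \<Rightarrow> 'v) \<Rightarrow> 'v set" where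
  "simp_verts V E d c = V - (sinks V E c - isolating_sinks V E d c)"

definition oriented_edges :: "'e set \<Rightarrow> ('e \<Rightarrow> 'v) \<Rightarrow> ('e \<Rightarrow> 'v) \<Rightarrow> ('e \<Rightarrow> sign) \<Rightarrow> ('v \<times> 'v) set" where
  "oriented_edges E d c \<sigma> = {(if \<sigma> x = Plus then (d x, c x) else (c x, d x)) | x. x \<in> E}"

definition acyclic_labeling :: "'e set \<Rightarrow> ('e \<Rightarrow> 'v) \<Rightarrow> ('e \<Rightarrow> 'v) \<Rightarrow> ('e \<Rightarrow> sign) \<Rightarrow> bool" where
  "acyclic_labeling E d c \<sigma> \<longleftrightarrow> acyclic (oriented_edges E d c \<sigma>)"

definition strict_labeling :: "'v set \<Rightarrow> 'e set \<Rightarrow> ('e \<Rightarrow> 'v) \<Rightarrow> ('e \<Rightarrow> sign) \<Rightarrow> bool" where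
  "strict_labeling V E c \<sigma> \<longleftrightarrow> (\<forall>v\<in>sinks V E c. \<exists>!x. x \<in> E \<and> c x = v \<and> \<sigma> x = Plus)"

definition graphic_ordering :: "'v set \<Rightarrow> 'e set \<Rightarrow> ('e \<Rightarrow> 'v) \<Rightarrow> ('v \<times> 'v) set \<Rightarrow> bool" where
  "graphic_ordering V E c le \<longleftrightarrow> linear_order_on (sources V E c) le"

definition sigma_le :: "'e set \<Rightarrow> ('e \<Rightarrow> 'v) \<Rightarrow> ('e \<Rightarrow> 'v) \<Rightarrow> ('v \<times> 'v) set \<Rightarrow> 'e \<Rightarrow> sign" where
  "sigma_le E d c le x =
     (let S = {d y | y. y \<in> simp_arrows E d c \<and> c y = c x} in
      if d x \<in> S \<and> (\<forall>z\<in>S. (d x, z) \<in> le) then Plus else Minus)"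

end

theory Submission
  imports Defs
begin

lemma lin_min_exists:
  assumes "finite S" "S \<noteq> {}" "S \<subseteq> D" "linear_order_on D le"
  shows "\<exists>m\<in>S. \<forall>z\<in>S. (m,z) \<in> le"
  using assms(1,2,3)
proof (induction S rule: finite_ne_induct)
  case (singleton x)
  then show ?case using assms(4)
    unfolding linear_order_on_def partial_order_on_def preorder_on_def refl_on_def by auto
next
  case (insert x F)
  then obtain m where m: "m \<in> F" "\<forall>z\<in>F. (m,z) \<in> le" by auto
  have lo: "refl_on D le" "trans le" "total_on D le"
    using assms(4) unfolding linear_order_on_def partial_order_on_def preorder_on_def by auto
  have xD: "x \<in> D" "m \<in> D" using insert m by auto
  show ?case
  proof (cases "(x,m) \<in> le")
    case True
    then have "\<forall>z\<in>F. (x,z) \<in> le" using m lo(2) unfolding trans_def by blast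
    then show ?thesis using lo(1) xD unfolding refl_on_def by auto
  next
    case False
    then have "x \<noteq> m" using lo(1) xD unfolding refl_on_def by auto
    then have "(m,x) \<in> le" using False lo(3) xD unfolding total_on_def by auto
    then show ?thesis using m by auto
  qed
qed

definition rk :: "'a set \<Rightarrow> ('a \<times> 'a) set \<Rightarrow> 'a \<Rightarrow> nat" where
  "rk S r a = card {t\<in>S. (t,a) \<in> r}"

lemma rk_lin_strict:
  assumes "finite S" "linear_order_on S le" "a \<in> S" "b \<in> S" "(a,b) \<in> le" "a \<noteq> b"
  shows "rk S le a < rk S le b"
proof -
  have lo: "refl_on S le" "trans le" "antisym le"
    using assms(2) unfolding linear_order_on_def partial_order_on_def preorder_on_def by auto
  have "{t\<in>S. (t,a) \<in> le} \<subset> {t\<in>S. (t,b) \<in> le}"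
  proof
    show "{t\<in>S. (t,a) \<in> le} \<subseteq> {t\<in>S. (t,b) \<in> le}"
      using lo(2) assms(5) unfolding trans_def by blast
    have "b \<in> {t\<in>S. (t,b) \<in> le}" using lo(1) assms(4) unfolding refl_on_def by auto
    moreover have "b \<notin> {t\<in>S. (t,a) \<in> le}" using lo(3) assms(5,6) unfolding antisym_def by auto
    ultimately show "{t\<in>S. (t,a) \<in> le} \<noteq> {t\<in>S. (t,b) \<in> le}" by blast
  qed
  then show ?thesis unfolding rk_def using assms(1) by (simp add: psubset_card_mono)
qed

lemma acyclic_by_potential:
  assumes "\<And>u w. (u,w) \<in> R \<Longrightarrow> (\<phi> u :: nat) < \<phi> w"
  shows "acyclic R"
proof -
  have "(u,w) \<in> R\<^sup>+ \<Longrightarrow> \<phi> u < \<phi> w" for u w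
    by (induction rule: trancl_induct) (auto dest: assms)
  then show ?thesis unfolding acyclic_def by blast
qed

lemma lin_ext:
  assumes "finite S" "acyclic R"
  shows "\<exists>le. linear_order_on S le \<and> (\<forall>a\<in>S. \<forall>b\<in>S. (a,b) \<in> R\<^sup>+ \<longrightarrow> (a,b) \<in> le)"
proof -
  obtain g where g: "bij_betw g S {0..<card S}" using ex_bij_betw_finite_nat[OF assms(1)] by blast
  define K where "K = card S"
  define rr where "rr a = card {t\<in>S. (t,a) \<in> R\<^sup>+}" for a
  define h where "h a = rr a * K + g a" for a
  have gK: "a \<in> S \<Longrightarrow> g a < K" for a using g unfolding K_def bij_betw_def by auto
  have rrmono: "rr a < rr b" if "a \<in> S" "b \<in> S" "(a,b) \<in> R\<^sup>+" for a b
  proof -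
    have "{t\<in>S. (t,a) \<in> R\<^sup>+} \<subset> {t\<in>S. (t,b) \<in> R\<^sup>+}"
    proof
      show "{t\<in>S. (t,a) \<in> R\<^sup>+} \<subseteq> {t\<in>S. (t,b) \<in> R\<^sup>+}"
        using that(3) by (auto intro: trancl_trans)
      have "a \<notin> {t\<in>S. (t,a) \<in> R\<^sup>+}" using assms(2) unfolding acyclic_def by auto
      then show "{t\<in>S. (t,a) \<in> R\<^sup>+} \<noteq> {t\<in>S. (t,b) \<in> R\<^sup>+}" using that by auto
    qed
    then show ?thesis unfolding rr_def using assms(1) by (simp add: psubset_card_mono)
  qed
  have hlt: "h a < h b" if "a \<in> S" "b \<in> S" "rr a < rr b" for a b
  proof -
    have "h a < rr a * K + K" using gK[OF that(1)] unfolding h_def by simp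
    also have "\<dots> = Suc (rr a) * K" by simp
    also have "\<dots> \<le> rr b * K" using that(3) by (intro mult_le_mono1) simp
    also have "\<dots> \<le> h b" unfolding h_def by simp
    finally show ?thesis .
  qed
  have hinj: "a = b" if "a \<in> S" "b \<in> S" "h a = h b" for a b
  proof -
    have "rr a = rr b" using hlt[of a b] hlt[of b a] that by (metis linorder_neqE_nat less_irrefl)
    then have "g a = g b" using that unfolding h_def by simp
    then show ?thesis using g that unfolding bij_betw_def inj_on_def by auto
  qed
  define le where "le = {(a,b). a \<in> S \<and> b \<in> S \<and> h a \<le> h b}"
  have "le \<subseteq> S \<times> S" unfolding le_def by auto
  moreover have "refl_on S le" unfolding refl_on_def le_def by auto
  moreover have "trans le" unfolding trans_def le_def by auto
  moreover have "antisym le"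
  proof (unfold antisym_def, intro allI impI)
    fix a b assume "(a,b) \<in> le" "(b,a) \<in> le"
    then have "a \<in> S" "b \<in> S" "h a = h b" unfolding le_def by auto
    then show "a = b" by (rule hinj)
  qed
  moreover have "total_on S le" unfolding total_on_def le_def by auto
  ultimately have "linear_order_on S le"
    unfolding linear_order_on_def partial_order_on_def preorder_on_def by blast
  moreover have "\<forall>a\<in>S. \<forall>b\<in>S. (a,b) \<in> R\<^sup>+ \<longrightarrow> (a,b) \<in> le"
    unfolding le_def using rrmono hlt by (auto intro: less_imp_le)
  ultimately show ?thesis by blast
qed

theorem mainTheorem9:
  fixes V :: "'v set" and E :: "'e set" and d c :: "'e \<Rightarrow> 'v"
  assumes "finite_quiver V E d c"
    and "diameter_one E d c"
  shows "(\<lambda>le x. if x \<in> simp_arrows E d c then sigma_le E d c le x else undefined)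
           ` {le. graphic_ordering V E c le}
       = {\<sigma>. (\<forall>x. x \<notin> simp_arrows E d c \<longrightarrow> \<sigma> x = undefined) \<and>
              strict_labeling (simp_verts V E d c) (simp_arrows E d c) c \<sigma> \<and>
              acyclic_labeling (simp_arrows E d c) d c \<sigma>}"
proof -
  define A where "A = simp_arrows E d c"
  define Src where "Src = sources V E c"
  define SS where "SS v = {d y | y. y \<in> A \<and> c y = v}" for v
  have finV: "finite V" and finE: "finite E" and qv: "\<And>x. x \<in> E \<Longrightarrow> d x \<in> V \<and> c x \<in> V"
    using assms(1) unfolding finite_quiver_def quiver_def by auto
  have AE: "x \<in> A \<Longrightarrow> x \<in> E" for x unfolding A_def simp_arrows_def by auto
  have diam: "x \<in> E \<Longrightarrow> y \<in> E \<Longrightarrow> c x \<noteq> d y" for x y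
    using assms(2) unfolding diameter_one_def by auto
  have dSrc: "x \<in> E \<Longrightarrow> d x \<in> Src" for x
    unfolding Src_def sources_def sinks_def using qv diam by fastforce
  have cnSrc: "x \<in> E \<Longrightarrow> c x \<notin> Src" for x
    unfolding Src_def sources_def sinks_def using qv by fastforce
  have iso: "x \<in> A \<Longrightarrow> y \<in> A \<Longrightarrow> d x = d y \<Longrightarrow> c x = c y \<Longrightarrow> x = y" for x y
    unfolding A_def simp_arrows_def isolated_arrow_def by auto
  have finSrc: "finite Src" unfolding Src_def sources_def using finV by auto
  have sinksA: "sinks (simp_verts V E d c) A c = c ` A"
  proof -
    have "c x \<in> simp_verts V E d c" if "x \<in> A" for x
    proof -
      have "c x \<in> isolating_sinks V E d c"
        using that qv[OF AE[OF that]] AE[OF that]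
        unfolding isolating_sinks_def sinks_def A_def simp_arrows_def by auto
      then show ?thesis using qv[OF AE[OF that]] unfolding simp_verts_def by auto
    qed
    then show ?thesis unfolding sinks_def by auto
  qed
  have finSS: "finite (SS v)" for v
  proof -
    have "SS v \<subseteq> d ` E" unfolding SS_def using AE by auto
    then show ?thesis using finE finite_subset by blast
  qed
  have SSsub: "SS v \<subseteq> Src" for v unfolding SS_def using AE dSrc by auto
  have sig: "x \<in> A \<Longrightarrow> sigma_le E d c le x = Plus \<longleftrightarrow> (\<forall>z\<in>SS (c x). (d x, z) \<in> le)" for x le
  proof -
    assume "x \<in> A"
    then have "d x \<in> SS (c x)" unfolding SS_def by auto
    then show ?thesis unfolding sigma_le_def Let_def SS_def[symmetric] A_def[symmetric] by auto
  qed
  have signcases: "s \<noteq> Plus \<Longrightarrow> s = Minus" for s by (cases s) auto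
  show ?thesis
    unfolding A_def[symmetric]
  proof (intro equalityI subsetI)
    fix \<sigma> assume "\<sigma> \<in> (\<lambda>le x. if x \<in> A then sigma_le E d c le x else undefined) ` {le. graphic_ordering V E c le}"
    then obtain le where lo: "linear_order_on Src le" and
      \<sigma>: "\<sigma> = (\<lambda>x. if x \<in> A then sigma_le E d c le x else undefined)"
      unfolding graphic_ordering_def Src_def by auto
    have lop: "refl_on Src le" "trans le" "antisym le" "le \<subseteq> Src \<times> Src"
      using lo unfolding linear_order_on_def partial_order_on_def preorder_on_def by auto
    have \<sigma>A: "x \<in> A \<Longrightarrow> \<sigma> x = Plus \<longleftrightarrow> (\<forall>z\<in>SS (c x). (d x, z) \<in> le)" for x
      using sig \<sigma> by auto
    have exmin: "\<exists>m\<in>SS (c x). \<forall>z\<in>SS (c x). (m,z) \<in> le" if "x \<in> A" for x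
    proof (rule lin_min_exists[OF finSS _ SSsub lo])
      show "SS (c x) \<noteq> {}" using that unfolding SS_def by auto
    qed
    have strict: "strict_labeling (simp_verts V E d c) A c \<sigma>"
      unfolding strict_labeling_def sinksA
    proof
      fix v assume "v \<in> c ` A"
      then obtain x0 where x0: "x0 \<in> A" "v = c x0" by auto
      obtain m where m: "m \<in> SS v" "\<forall>z\<in>SS v. (m,z) \<in> le" using exmin[OF x0(1)] x0 by auto
      obtain y where y: "y \<in> A" "c y = v" "d y = m" using m(1) unfolding SS_def by auto
      have yP: "\<sigma> y = Plus" using \<sigma>A[OF y(1)] y m by auto
      show "\<exists>!x. x \<in> A \<and> c x = v \<and> \<sigma> x = Plus"
      proof (rule ex1I[of _ y])
        show "y \<in> A \<and> c y = v \<and> \<sigma> y = Plus" using y yP by auto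
      next
        fix x assume x: "x \<in> A \<and> c x = v \<and> \<sigma> x = Plus"
        then have "\<forall>z\<in>SS v. (d x, z) \<in> le" using \<sigma>A by auto
        moreover have "d x \<in> SS v" using x unfolding SS_def by auto
        ultimately have "d x = m" using m lop(3) unfolding antisym_def by blast
        then show "x = y" using iso x y by auto
      qed
    qed
    define h where "h = rk Src le"
    define \<phi> where "\<phi> v = (if v \<in> Src then 2 * h v else 2 * Min (h ` SS v) + 1)" for v
    have Minh: "Min (h ` SS v) = h m" if "m \<in> SS v" "\<forall>z\<in>SS v. (m,z) \<in> le" for v m
    proof (rule Min_eqI)
      show "finite (h ` SS v)" using finSS by auto
      show "h m \<in> h ` SS v" using that by auto
      fix k assume "k \<in> h ` SS v"
      then obtain z where z: "z \<in> SS v" "k = h z" by auto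
      show "h m \<le> k"
      proof (cases "m = z")
        case False
        then show ?thesis using rk_lin_strict[OF finSrc lo, of m z] z that SSsub unfolding h_def by fastforce
      qed (use z in auto)
    qed
    have acyc: "acyclic_labeling A d c \<sigma>"
      unfolding acyclic_labeling_def
    proof (rule acyclic_by_potential[of _ \<phi>])
      fix u w assume "(u,w) \<in> oriented_edges A d c \<sigma>"
      then obtain x where x: "x \<in> A" "(u,w) = (if \<sigma> x = Plus then (d x, c x) else (c x, d x))"
        unfolding oriented_edges_def by auto
      obtain m where m: "m \<in> SS (c x)" "\<forall>z\<in>SS (c x). (m,z) \<in> le" using exmin[OF x(1)] by auto
      have dxS: "d x \<in> SS (c x)" using x unfolding SS_def by auto
      have ph_d: "\<phi> (d x) = 2 * h (d x)" using dSrc AE x(1) unfolding \<phi>_def by auto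
      have ph_c: "\<phi> (c x) = 2 * h m + 1" using cnSrc AE x(1) Minh[OF m] unfolding \<phi>_def by auto
      show "\<phi> u < \<phi> w"
      proof (cases "\<sigma> x = Plus")
        case True
        then have "\<forall>z\<in>SS (c x). (d x, z) \<in> le" using \<sigma>A x by auto
        then have "d x = m" using m dxS lop(3) unfolding antisym_def by blast
        then show ?thesis using True x ph_d ph_c by auto
      next
        case False
        then have "d x \<noteq> m" using \<sigma>A x m by auto
        then have "h m < h (d x)" using rk_lin_strict[OF finSrc lo, of m "d x"] m dxS SSsub
          unfolding h_def by auto
        then show ?thesis using False x ph_d ph_c by auto
      qed
    qed
    show "\<sigma> \<in> {\<sigma>. (\<forall>x. x \<notin> A \<longrightarrow> \<sigma> x = undefined) \<and>
              strict_labeling (simp_verts V E d c) A c \<sigma> \<and> acyclic_labeling A d c \<sigma>}"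
      using strict acyc \<sigma> by auto
  next
    fix \<sigma> assume "\<sigma> \<in> {\<sigma>. (\<forall>x. x \<notin> A \<longrightarrow> \<sigma> x = undefined) \<and>
              strict_labeling (simp_verts V E d c) A c \<sigma> \<and> acyclic_labeling A d c \<sigma>}"
    then have und: "\<forall>x. x \<notin> A \<longrightarrow> \<sigma> x = undefined"
      and strict: "\<forall>v\<in>c ` A. \<exists>!x. x \<in> A \<and> c x = v \<and> \<sigma> x = Plus"
      and acyc: "acyclic (oriented_edges A d c \<sigma>)"
      unfolding strict_labeling_def acyclic_labeling_def sinksA by auto
    define R where "R = oriented_edges A d c \<sigma>"
    obtain le where lo: "linear_order_on Src le" and ext: "\<forall>a\<in>Src. \<forall>b\<in>Src. (a,b) \<in> R\<^sup>+ \<longrightarrow> (a,b) \<in> le"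
      using lin_ext[OF finSrc acyc] unfolding R_def by blast
    have lop: "refl_on Src le" "trans le" "antisym le"
      using lo unfolding linear_order_on_def partial_order_on_def preorder_on_def by auto
    have edge: "x \<in> A \<Longrightarrow> (if \<sigma> x = Plus then (d x, c x) else (c x, d x)) \<in> R" for x
      unfolding R_def oriented_edges_def by auto
    have "\<sigma> = (\<lambda>x. if x \<in> A then sigma_le E d c le x else undefined)"
    proof
      fix x
      show "\<sigma> x = (if x \<in> A then sigma_le E d c le x else undefined)"
      proof (cases "x \<in> A")
        case False
        then show ?thesis using und by auto
      next
        case True
        obtain p where p: "p \<in> A" "c p = c x" "\<sigma> p = Plus"
          and puniq: "\<And>y. y \<in> A \<Longrightarrow> c y = c x \<Longrightarrow> \<sigma> y = Plus \<Longrightarrow> y = p"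
          using strict True by blast
        have pmin: "\<forall>z\<in>SS (c x). (d p, z) \<in> le"
        proof
          fix z assume "z \<in> SS (c x)"
          then obtain y where y: "y \<in> A" "c y = c x" "z = d y" unfolding SS_def by auto
          show "(d p, z) \<in> le"
          proof (cases "\<sigma> y = Plus")
            case True
            then have "y = p" using puniq y by auto
            then show ?thesis using y lop(1) dSrc AE unfolding refl_on_def by auto
          next
            case False
            have "(d p, c x) \<in> R" using edge[OF p(1)] p by auto
            moreover have "(c x, d y) \<in> R" using edge[OF y(1)] y False by auto
            ultimately have "(d p, z) \<in> R\<^sup>+" using y by auto
            then show ?thesis using ext dSrc AE p(1) y by auto
          qed
        qed
        show ?thesis
        proof (cases "\<sigma> x = Plus")
          case True
          then have "x = p" using puniq \<open>x \<in> A\<close> by auto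
          then have "sigma_le E d c le x = Plus" using sig[OF \<open>x \<in> A\<close>] pmin by simp
          then show ?thesis using True \<open>x \<in> A\<close> by simp
        next
          case False
          have "sigma_le E d c le x \<noteq> Plus"
          proof
            assume "sigma_le E d c le x = Plus"
            then have "\<forall>z\<in>SS (c x). (d x, z) \<in> le" using sig[OF \<open>x \<in> A\<close>] by auto
            moreover have "d p \<in> SS (c x)" "d x \<in> SS (c x)" using p \<open>x \<in> A\<close> unfolding SS_def by auto
            ultimately have "d x = d p" using pmin lop(3) unfolding antisym_def by blast
            then have "x = p" using iso \<open>x \<in> A\<close> p by auto
            then show False using False p by auto
          qed
          then have "sigma_le E d c le x = Minus" by (rule signcases)
          moreover have "\<sigma> x = Minus" using False by (rule signcases)
          ultimately show ?thesis using True by simp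
        qed
      qed
    qed
    moreover have "graphic_ordering V E c le" using lo unfolding graphic_ordering_def Src_def .
    ultimately show "\<sigma> \<in> (\<lambda>le x. if x \<in> A then sigma_le E d c le x else undefined) ` {le. graphic_ordering V E c le}"
      by blast
  qed
qed

end
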